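(* Fix an integer $L\ge 1$ and $\alpha>0$, and let $N_{RF}=1$ or $N_{RF}=L$. For the IT-SU interleaved training scheme with $N_t$ beams, $L$ channel paths, $N_{RF}$ RF chains and threshold $\alpha$ described in the context, the average training length satisfies, as $N_t\to\infty$, $$T_{\text{IT-SU}}=\frac{N_t}{L+1}+\mathcal O(1),$$ where $\mathcal O(1)$ denotes a quantity bounded as $N_t\to\infty$ (with $L,\alpha$ fixed).
   Context: Channel model: for integers $N_t\ge L$, a random subset $\mathcal I\subset\{1,\dots,N_t\}$ with $|\mathcal I|=L$ is drawn uniformly among all $L$-element subsets; conditionally on $\mathcal I$, the coefficients $\bar h_i$, $i\in\mathcal I$, are i.i.d. circularly symmetric complex Gaussian $\mathcal{CN}(0,1/L)$, and $\bar h_i=0$ for $i\notin\mathcal I$. IT-SU scheme (with $N_{RF}\ge1$ RF chains and threshold $\alpha>0$): for $i=1,2,\dots,N_t$ in order, beam $i$ is trained, i.e. $\bar h_i$ becomes known. After step $i$, let $\mathcal B_i=\{l\le i:\bar h_l\neq 0\}$, $L_{B_i}=\min(N_{RF},|\mathcal B_i|)$, and let $\mathcal S_i\subset\mathcal B_i$ be the indices of the $L_{B_i}$ elements of $\mathcal B_i$ with largest $|\bar h_l|$. The training terminates at step $i$ if $\bar h_i\ne 0$ and $\sum_{l\in\mathcal S_i}|\bar h_l|^2>\alpha/N_t$; otherwise it proceeds to step $i+1$. The training length $T$ is the step at which the training terminates, and $T=N_t$ if it never terminates. The average training length is $T_{\text{IT-SU}}=\mathrm E[T]$. *)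

theory Defs
  imports "HOL-Probability.Probability"
begin

text \<open>Circularly symmetric complex Gaussian CN(0, v): real and imaginary parts
  independent real Gaussians N(0, v/2) (standard deviation sqrt(v/2)).\<close>
definition cgauss :: "real \<Rightarrow> complex measure" where
  "cgauss v = distr
     (density lborel (normal_density 0 (sqrt (v / 2))) \<Otimes>\<^sub>M
      density lborel (normal_density 0 (sqrt (v / 2))))
     borel (\<lambda>(x, y). Complex x y)"

definition path_sets :: "nat \<Rightarrow> nat \<Rightarrow> nat set set" where
  "path_sets Nt L = {I. I \<subseteq> {1..Nt} \<and> card I = L}"

text \<open>Sample space: (support I, i.i.d. Gaussians g_1..g_Nt); the channel is
  h_i = g_i for i in I and h_i = 0 otherwise, so conditionally on I the
  h_i, i in I, are i.i.d. CN(0,1/L).\<close>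
definition chan_space :: "nat \<Rightarrow> nat \<Rightarrow> (nat set \<times> (nat \<Rightarrow> complex)) measure" where
  "chan_space Nt L =
     measure_pmf (pmf_of_set (path_sets Nt L)) \<Otimes>\<^sub>M
     PiM {1..Nt} (\<lambda>_. cgauss (1 / real L))"

definition chan :: "nat set \<times> (nat \<Rightarrow> complex) \<Rightarrow> nat \<Rightarrow> complex" where
  "chan \<omega> i = (if i \<in> fst \<omega> then snd \<omega> i else 0)"

definition Bset :: "(nat \<Rightarrow> complex) \<Rightarrow> nat \<Rightarrow> nat set" where
  "Bset h i = {l \<in> {1..i}. h l \<noteq> 0}"

text \<open>Sum of |h_l|^2 over S_i, the L_{B_i} = min(N_RF, |B_i|) elements of B_i
  with largest |h_l| (the maximal such sum over subsets of that size).\<close>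
definition top_energy :: "nat \<Rightarrow> (nat \<Rightarrow> complex) \<Rightarrow> nat \<Rightarrow> real" where
  "top_energy NRF h i =
     Max ((\<lambda>S. \<Sum>l\<in>S. (cmod (h l))\<^sup>2) `
          {S. S \<subseteq> Bset h i \<and> card S = min NRF (card (Bset h i))})"

definition stops :: "nat \<Rightarrow> nat \<Rightarrow> real \<Rightarrow> (nat \<Rightarrow> complex) \<Rightarrow> nat \<Rightarrow> bool" where
  "stops Nt NRF \<alpha> h i \<longleftrightarrow> h i \<noteq> 0 \<and> top_energy NRF h i > \<alpha> / real Nt"

definition train_len :: "nat \<Rightarrow> nat \<Rightarrow> real \<Rightarrow> (nat \<Rightarrow> complex) \<Rightarrow> nat" where
  "train_len Nt NRF \<alpha> h =
     (if \<exists>i\<in>{1..Nt}. stops Nt NRF \<alpha> h i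
      then (LEAST i. i \<in> {1..Nt} \<and> stops Nt NRF \<alpha> h i) else Nt)"

definition T_ITSU :: "nat \<Rightarrow> nat \<Rightarrow> nat \<Rightarrow> real \<Rightarrow> real" where
  "T_ITSU Nt L NRF \<alpha> =
     (\<integral>\<omega>. real (train_len Nt NRF \<alpha> (chan \<omega>)) \<partial>(chan_space Nt L))"

end

theory Submission
  imports Defs
begin



lemma chan_meas[measurable]: "(\<lambda>\<omega>. chan \<omega> l) \<in> borel_measurable (chan_space Nt L)"
proof -
  have p: "Measurable.pred (chan_space Nt L) (\<lambda>\<omega>. l \<in> fst \<omega>)"
  proof -
    have "(\<lambda>I. l \<in> I) \<in> measurable (measure_pmf (pmf_of_set (path_sets Nt L))) (count_space UNIV)"
      by simp
    from measurable_compose[OF measurable_fst this] show ?thesis by (simp add: chan_space_def)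
  qed
  have s: "(\<lambda>\<omega>. snd \<omega> l) \<in> borel_measurable (chan_space Nt L)"
  proof (cases "l \<in> {1..Nt}")
    case True
    have "(\<lambda>\<omega>. snd \<omega> l) \<in> measurable (chan_space Nt L) (cgauss (1 / real L))"
      unfolding chan_space_def
      by (rule measurable_compose[OF measurable_snd measurable_component_singleton[OF True]])
    moreover have "sets (cgauss (1 / real L)) = sets borel" by (simp add: cgauss_def)
    ultimately show ?thesis using measurable_cong_sets by blast
  next
    case False
    have "\<And>\<omega>. \<omega> \<in> space (chan_space Nt L) \<Longrightarrow> snd \<omega> l = undefined"
      using False unfolding chan_space_def by (auto simp: space_pair_measure space_PiM PiE_def extensional_def)
    then show ?thesis using measurable_cong[of "chan_space Nt L" "\<lambda>\<omega>. snd \<omega> l" "\<lambda>_. undefined" borel]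
      by simp
  qed
  show ?thesis unfolding chan_def using p s by measurable
qed

lemma stops_iff: "stops Nt NRF \<alpha> h i \<longleftrightarrow> h i \<noteq> 0 \<and>
   (\<exists>B\<in>Pow {1..i}. (\<forall>l\<in>{1..i}. l \<in> B \<longleftrightarrow> h l \<noteq> 0) \<and>
      (\<exists>S\<in>Pow {1..i}. S \<subseteq> B \<and> card S = min NRF (card B) \<and> \<alpha> / real Nt < (\<Sum>l\<in>S. (cmod (h l))\<^sup>2)))"
proof -
  define B where "B = Bset h i"
  have BB: "B \<in> Pow {1..i}" "\<forall>l\<in>{1..i}. l \<in> B \<longleftrightarrow> h l \<noteq> 0" unfolding B_def Bset_def by auto
  have uniq: "\<And>B'. B' \<in> Pow {1..i} \<Longrightarrow> (\<forall>l\<in>{1..i}. l \<in> B' \<longleftrightarrow> h l \<noteq> 0) \<Longrightarrow> B' = B"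
    using BB by auto
  have finB: "finite B" using BB(1) finite_subset by auto
  obtain S0 where S0: "S0 \<subseteq> B" "card S0 = min NRF (card B)"
    using obtain_subset_with_card_n[of "min NRF (card B)" B] by auto
  let ?F = "{S. S \<subseteq> B \<and> card S = min NRF (card B)}"
  have fin: "finite ?F" by (rule finite_subset[of _ "Pow B"]) (auto simp: finB)
  have ne: "?F \<noteq> {}" using S0 by auto
  have te: "top_energy NRF h i = Max ((\<lambda>S. \<Sum>l\<in>S. (cmod (h l))\<^sup>2) ` ?F)"
    unfolding top_energy_def B_def by simp
  have "(\<alpha> / real Nt < top_energy NRF h i) \<longleftrightarrow> (\<exists>S\<in>?F. \<alpha> / real Nt < (\<Sum>l\<in>S. (cmod (h l))\<^sup>2))"
    unfolding te using fin ne by (subst Max_gr_iff) auto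
  also have "\<dots> \<longleftrightarrow> (\<exists>S\<in>Pow {1..i}. S \<subseteq> B \<and> card S = min NRF (card B) \<and> \<alpha> / real Nt < (\<Sum>l\<in>S. (cmod (h l))\<^sup>2))"
    using BB(1) by auto
  finally show ?thesis unfolding stops_def using BB uniq by metis
qed

lemma stops_meas[measurable]: "Measurable.pred (chan_space Nt L) (\<lambda>\<omega>. stops Nt NRF \<alpha> (chan \<omega>) i)"
  unfolding stops_iff by measurable

lemma tl_eq: "((if \<exists>i\<in>{1..N}. P i then (LEAST i. i \<in> {1..N} \<and> P i) else N) = (k::nat)) \<longleftrightarrow>
   ((k \<in> {1..N} \<and> P k \<and> (\<forall>j\<in>{1..N}. j < k \<longrightarrow> \<not> P j)) \<or> ((\<forall>i\<in>{1..N}. \<not> P i) \<and> k = N))"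
proof (cases "\<exists>i\<in>{1..N}. P i")
  case True
  then obtain i where i: "i \<in> {1..N}" "P i" by auto
  have L: "(LEAST i. i \<in> {1..N} \<and> P i) \<in> {1..N} \<and> P (LEAST i. i \<in> {1..N} \<and> P i)"
    using LeastI[of "\<lambda>i. i \<in> {1..N} \<and> P i" i] i by auto
  have M: "\<And>j. j \<in> {1..N} \<Longrightarrow> P j \<Longrightarrow> (LEAST i. i \<in> {1..N} \<and> P i) \<le> j"
    by (rule Least_le) auto
  define m where "m = (LEAST i. i \<in> {1..N} \<and> P i)"
  have m1: "m \<in> {1..N}" "P m" using L unfolding m_def by auto
  have m2: "\<And>j. j \<in> {1..N} \<Longrightarrow> P j \<Longrightarrow> m \<le> j" using M unfolding m_def by auto
  have "m = k \<longleftrightarrow> (k \<in> {1..N} \<and> P k \<and> (\<forall>j\<in>{1..N}. j < k \<longrightarrow> \<not> P j))"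
  proof
    assume mk: "m = k"
    have "\<forall>j\<in>{1..N}. j < k \<longrightarrow> \<not> P j" using m2 mk by (meson leD)
    then show "k \<in> {1..N} \<and> P k \<and> (\<forall>j\<in>{1..N}. j < k \<longrightarrow> \<not> P j)"
      using m1 mk by auto
  next
    assume k: "k \<in> {1..N} \<and> P k \<and> (\<forall>j\<in>{1..N}. j < k \<longrightarrow> \<not> P j)"
    then have "m \<le> k" using m2 by auto
    moreover have "\<not> m < k" using k m1 by auto
    ultimately show "m = k" by simp
  qed
  then show ?thesis using True unfolding m_def[symmetric] by auto
qed auto

lemma train_meas[measurable]: "(\<lambda>\<omega>. real (train_len Nt NRF \<alpha> (chan \<omega>))) \<in> borel_measurable (chan_space Nt L)"
proof -
  have "(\<lambda>\<omega>. train_len Nt NRF \<alpha> (chan \<omega>)) \<in> measurable (chan_space Nt L) (count_space UNIV)"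
  proof (rule measurable_count_space_eq2_countable[THEN iffD2], safe)
    fix k :: nat
    have "Measurable.pred (chan_space Nt L) (\<lambda>\<omega>. train_len Nt NRF \<alpha> (chan \<omega>) = k)"
      unfolding train_len_def tl_eq by measurable
    then show "(\<lambda>\<omega>. train_len Nt NRF \<alpha> (chan \<omega>)) -` {k} \<inter> space (chan_space Nt L) \<in> sets (chan_space Nt L)"
      unfolding pred_def by (simp add: vimage_def Int_def conj_commute)
  qed auto
  then show ?thesis by measurable
qed



lemma nd_le: "normal_density 0 \<sigma> x \<le> 1 / sqrt (2 * pi * \<sigma>\<^sup>2)"
proof -
  have "-(x - 0)\<^sup>2/ (2 * \<sigma>\<^sup>2) \<le> 0" by (intro divide_nonpos_nonneg) auto
  then have e: "exp (-(x - 0)\<^sup>2/ (2 * \<sigma>\<^sup>2)) \<le> 1" by simp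
  have "1 / sqrt (2 * pi * \<sigma>\<^sup>2) * exp (-(x - 0)\<^sup>2/ (2 * \<sigma>\<^sup>2)) \<le> 1 / sqrt (2 * pi * \<sigma>\<^sup>2) * 1"
    by (intro mult_left_mono e) auto
  then show ?thesis unfolding normal_density_def by simp
qed

lemma gauss1:
  assumes "\<sigma> > 0" "r \<ge> 0"
  shows "emeasure (density lborel (normal_density 0 \<sigma>)) {-r..r} \<le> ennreal (2 * r / sqrt (2 * pi * \<sigma>\<^sup>2))"
proof -
  let ?d = "1 / sqrt (2 * pi * \<sigma>\<^sup>2)"
  have "emeasure (density lborel (normal_density 0 \<sigma>)) {-r..r} = (\<integral>\<^sup>+x. ennreal (normal_density 0 \<sigma> x) * indicator {-r..r} x \<partial>lborel)"
    by (subst emeasure_density) auto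
  also have "\<dots> \<le> (\<integral>\<^sup>+x. ennreal ?d * indicator {-r..r} x \<partial>lborel)"
    by (intro nn_integral_mono) (auto simp: nd_le split: split_indicator)
  also have "\<dots> = ennreal ?d * emeasure lborel {-r..r}"
    by (subst nn_integral_cmult_indicator) auto
  also have "\<dots> = ennreal (2 * r / sqrt (2 * pi * \<sigma>\<^sup>2))"
    using assms by (simp add: ennreal_mult[symmetric])
  finally show ?thesis .
qed


lemma gauss2:
  assumes v: "v > 0" and c: "c \<ge> 0"
  shows "measure (cgauss v) {z. (cmod z)\<^sup>2 \<le> c} \<le> 4 * c / v"
proof -
  define \<sigma> where "\<sigma> = sqrt (v / 2)"
  have s: "\<sigma> > 0" using v by (simp add: \<sigma>_def)
  let ?N = "density lborel (normal_density 0 \<sigma>)"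
  have "prob_space ?N" using s by (intro prob_space_normal_density) auto
  then interpret N: prob_space ?N .
  interpret P: pair_prob_space ?N ?N by unfold_locales
  have m: "(\<lambda>(x, y). Complex x y) \<in> borel_measurable (?N \<Otimes>\<^sub>M ?N)"
  proof -
    have "(\<lambda>(x, y). Complex x y) = (\<lambda>p. complex_of_real (fst p) + \<i> * complex_of_real (snd p))"
      by (auto simp: complex_eq_iff)
    moreover have "(\<lambda>p. complex_of_real (fst p) + \<i> * complex_of_real (snd p)) \<in> borel_measurable (?N \<Otimes>\<^sub>M ?N)"
      by measurable
    ultimately show ?thesis by simp
  qed
  let ?A = "{- sqrt c..sqrt c}"
  have Z: "{z. (cmod z)\<^sup>2 \<le> c} \<in> sets borel" by measurable
  have "emeasure (cgauss v) {z. (cmod z)\<^sup>2 \<le> c} = emeasure (?N \<Otimes>\<^sub>M ?N) ((\<lambda>(x, y). Complex x y) -` {z. (cmod z)\<^sup>2 \<le> c} \<inter> space (?N \<Otimes>\<^sub>M ?N))"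
    unfolding cgauss_def \<sigma>_def[symmetric] by (rule emeasure_distr[OF m Z])
  also have "\<dots> \<le> emeasure (?N \<Otimes>\<^sub>M ?N) (?A \<times> ?A)"
  proof (rule emeasure_mono)
    show "(\<lambda>(x, y). Complex x y) -` {z. (cmod z)\<^sup>2 \<le> c} \<inter> space (?N \<Otimes>\<^sub>M ?N) \<subseteq> ?A \<times> ?A"
    proof
      fix p assume "p \<in> (\<lambda>(x, y). Complex x y) -` {z. (cmod z)\<^sup>2 \<le> c} \<inter> space (?N \<Otimes>\<^sub>M ?N)"
      then obtain a b where p: "p = (a, b)" and "(cmod (Complex a b))\<^sup>2 \<le> c" by (cases p) auto
      then have "a\<^sup>2 + b\<^sup>2 \<le> c" by (simp add: cmod_def)
      then have "a\<^sup>2 \<le> c" "b\<^sup>2 \<le> c" by (smt (verit) zero_le_power2)+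
      then have "\<bar>a\<bar> \<le> sqrt c" "\<bar>b\<bar> \<le> sqrt c" by (metis power2_abs real_le_rsqrt)+
      then show "p \<in> ?A \<times> ?A" using p by auto
    qed
  qed auto
  also have "\<dots> = emeasure ?N ?A * emeasure ?N ?A"
    by (rule N.emeasure_pair_measure_Times) auto
  also have "\<dots> \<le> ennreal (2 * sqrt c / sqrt (2 * pi * \<sigma>\<^sup>2)) * ennreal (2 * sqrt c / sqrt (2 * pi * \<sigma>\<^sup>2))"
    using gauss1[OF s, of "sqrt c"] c by (intro mult_mono) auto
  also have "\<dots> = ennreal (4 * c / (2 * pi * \<sigma>\<^sup>2))"
  proof -
    define q where "q = 2 * pi * \<sigma>\<^sup>2"
    have q: "q > 0" using s by (simp add: q_def)
    have nn: "0 \<le> 2 * sqrt c / sqrt q" using c q by simp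
    have r: "(2 * sqrt c / sqrt q) * (2 * sqrt c / sqrt q) = 4 * c / q"
    proof -
      have "(2 * sqrt c / sqrt q) * (2 * sqrt c / sqrt q) = (4 * (sqrt c * sqrt c)) / (sqrt q * sqrt q)"
        by (simp add: field_simps)
      also have "\<dots> = 4 * c / q" using c q by simp
      finally show ?thesis .
    qed
    show ?thesis unfolding q_def[symmetric] using ennreal_mult[OF nn nn] r by simp
  qed
  also have "\<dots> \<le> ennreal (4 * c / v)"
  proof (intro ennreal_leI divide_left_mono)
    show "v \<le> 2 * pi * \<sigma>\<^sup>2" using v pi_gt3 by (simp add: \<sigma>_def)
  qed (use c v s in auto)
  finally have "emeasure (cgauss v) {z. (cmod z)\<^sup>2 \<le> c} \<le> ennreal (4 * c / v)" .
  then show ?thesis using c v by (simp add: measure_def enn2real_leI)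
qed



lemma min_sum:
  assumes L: "L \<ge> 1" 
  shows "(\<Sum>I\<in>path_sets n L. Min I) = (Suc n choose Suc L)"
proof -
  let ?PS = "path_sets n L"
  have finPS: "finite ?PS" unfolding path_sets_def
    by (rule finite_subset[of _ "Pow {1..n}"]) auto
  have mem: "I \<noteq> {} \<and> finite I \<and> I \<subseteq> {1..n}" if "I \<in> ?PS" for I
    using that L unfolding path_sets_def by (auto intro: finite_subset)
  have minI: "Min I = (\<Sum>k\<in>{1..n}. if k \<le> Min I then 1 else 0)" if "I \<in> ?PS" for I
  proof -
    have "Min I \<in> I" using mem[OF that] by auto
    then have mi: "Min I \<in> {1..n}" using mem[OF that] by blast
    have "(\<Sum>k\<in>{1..n}. if k \<le> Min I then 1 else 0) = card {k\<in>{1..n}. k \<le> Min I}"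
      by (simp add: sum.inter_filter[symmetric])
    also have "{k\<in>{1..n}. k \<le> Min I} = {1..Min I}" using mi by auto
    finally show ?thesis by simp
  qed
  have "(\<Sum>I\<in>?PS. Min I) = (\<Sum>I\<in>?PS. \<Sum>k\<in>{1..n}. if k \<le> Min I then 1 else 0)"
    using minI by (intro sum.cong) auto
  also have "\<dots> = (\<Sum>k\<in>{1..n}. \<Sum>I\<in>?PS. if k \<le> Min I then 1 else 0)"
    by (rule sum.swap)
  also have "\<dots> = (\<Sum>k\<in>{1..n}. (Suc n - k) choose L)"
  proof (intro sum.cong refl)
    fix k assume k: "k \<in> {1..n}"
    have "(\<Sum>I\<in>?PS. if k \<le> Min I then 1 else 0) = card {I\<in>?PS. k \<le> Min I}"
      using finPS by (simp add: sum.inter_filter[symmetric])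
    also have "{I\<in>?PS. k \<le> Min I} = {I. I \<subseteq> {k..n} \<and> card I = L}"
    proof (intro set_eqI iffI)
      fix I assume "I \<in> {I\<in>?PS. k \<le> Min I}"
      then have I: "I \<in> ?PS" "k \<le> Min I" by auto
      have "I \<subseteq> {k..n}"
      proof
        fix x assume "x \<in> I"
        then show "x \<in> {k..n}" using mem[OF I(1)] Min_le[of I x] I(2) by auto
      qed
      then show "I \<in> {I. I \<subseteq> {k..n} \<and> card I = L}" using I(1) by (simp add: path_sets_def)
    next
      fix I assume "I \<in> {I. I \<subseteq> {k..n} \<and> card I = L}"
      then have I: "I \<subseteq> {k..n}" "card I = L" by auto
      then have "I \<noteq> {}" "finite I" using L by (auto intro: finite_subset)
      then have "k \<le> Min I" using I by auto
      then show "I \<in> {I\<in>?PS. k \<le> Min I}" using I k by (auto simp: path_sets_def)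
    qed
    also have "card \<dots> = (Suc n - k) choose L"
      by (subst n_subsets) auto
    finally show "(\<Sum>I\<in>?PS. if k \<le> Min I then 1 else 0) = (Suc n - k) choose L" .
  qed
  also have "\<dots> = (\<Sum>k\<in>{1..n}. k choose L)"
    by (subst sum.atLeastAtMost_rev) (intro sum.cong refl, auto)
  also have "\<dots> = (\<Sum>k\<le>n. k choose L)"
  proof -
    have "{..n} = insert 0 {1..n}" by auto
    then show ?thesis using L by simp
  qed
  also have "\<dots> = Suc n choose Suc L" by (rule sum_choose_upper)
  finally show ?thesis .
qed

lemma card_PS: "card (path_sets n L) = n choose L"
  unfolding path_sets_def by (subst n_subsets) auto

lemma avg_min:
  assumes L: "L \<ge> 1" "L \<le> n"
  shows "(\<Sum>I\<in>path_sets n L. real (Min I)) / real (card (path_sets n L)) = (real n + 1) / (real L + 1)"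
proof -
  have "(\<Sum>I\<in>path_sets n L. real (Min I)) = real (Suc n choose Suc L)"
    using min_sum[OF L(1)] by (metis of_nat_sum)
  moreover have "real (Suc n) * real (n choose L) = real (Suc n choose Suc L) * real (Suc L)"
    using Suc_times_binomial_eq[of n L] by (metis of_nat_mult)
  moreover have "(n choose L) > 0" using L by simp
  ultimately show ?thesis unfolding card_PS by (simp add: field_simps)
qed


lemma prob_cgauss: assumes "v > 0" shows "prob_space (cgauss v)"
proof -
  let ?N = "density lborel (normal_density 0 (sqrt (v/2)))"
  have "prob_space ?N" using assms by (intro prob_space_normal_density) auto
  then interpret N: prob_space ?N .
  interpret P: pair_prob_space ?N ?N by unfold_locales
  have m: "(\<lambda>(x, y). Complex x y) \<in> borel_measurable (?N \<Otimes>\<^sub>M ?N)"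
  proof -
    have "(\<lambda>(x, y). Complex x y) = (\<lambda>p. complex_of_real (fst p) + \<i> * complex_of_real (snd p))"
      by (auto simp: complex_eq_iff)
    moreover have "(\<lambda>p. complex_of_real (fst p) + \<i> * complex_of_real (snd p)) \<in> borel_measurable (?N \<Otimes>\<^sub>M ?N)"
      by measurable
    ultimately show ?thesis by simp
  qed
  show ?thesis unfolding cgauss_def by (intro P.prob_space_distr m)
qed

lemma tl_le: "train_len Nt NRF \<alpha> h \<le> Nt"
proof (cases "\<exists>i\<in>{1..Nt}. stops Nt NRF \<alpha> h i")
  case True
  then obtain i where i: "i \<in> {1..Nt}" "stops Nt NRF \<alpha> h i" by auto
  have "(LEAST i. i \<in> {1..Nt} \<and> stops Nt NRF \<alpha> h i) \<in> {1..Nt}"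
    using LeastI[of "\<lambda>i. i \<in> {1..Nt} \<and> stops Nt NRF \<alpha> h i" i] i by auto
  then show ?thesis using True unfolding train_len_def by auto
qed (auto simp: train_len_def)

lemma tl_lower:
  assumes "m \<le> Nt" "\<And>l. 1 \<le> l \<Longrightarrow> l < m \<Longrightarrow> h l = 0"
  shows "m \<le> train_len Nt NRF \<alpha> h"
proof (cases "\<exists>i\<in>{1..Nt}. stops Nt NRF \<alpha> h i")
  case True
  then obtain i where i: "i \<in> {1..Nt}" "stops Nt NRF \<alpha> h i" by auto
  define k where "k = (LEAST i. i \<in> {1..Nt} \<and> stops Nt NRF \<alpha> h i)"
  have "k \<in> {1..Nt} \<and> stops Nt NRF \<alpha> h k"
    using LeastI[of "\<lambda>i. i \<in> {1..Nt} \<and> stops Nt NRF \<alpha> h i" i] i unfolding k_def by auto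
  then have "h k \<noteq> 0" "1 \<le> k" by (auto simp: stops_def)
  then have "m \<le> k" using assms(2) by (meson not_le)
  then show ?thesis using True unfolding train_len_def k_def by auto
qed (use assms in \<open>auto simp: train_len_def\<close>)


lemma pps: "prob_space (cgauss v) \<Longrightarrow> product_prob_space (\<lambda>_. cgauss v)"
proof -
  assume pc: "prob_space (cgauss v)"
  interpret S: sigma_finite_measure "cgauss v" by (rule prob_space_imp_sigma_finite[OF pc])
  interpret P1: prob_space "cgauss v" by (rule pc)
  show "product_prob_space (\<lambda>_. cgauss v)"
    by unfold_locales
qed


lemma tl_upper:
  assumes m: "m \<in> {1..Nt}" and z: "\<And>l. 1 \<le> l \<Longrightarrow> l < m \<Longrightarrow> h l = 0"
    and big: "\<alpha> / real Nt < (cmod (h m))\<^sup>2" and a: "\<alpha> \<ge> 0" and N: "NRF \<ge> 1"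
  shows "train_len Nt NRF \<alpha> h \<le> m"
proof -
  have hm: "h m \<noteq> 0"
  proof
    assume "h m = 0"
    then have "(cmod (h m))\<^sup>2 = 0" by simp
    moreover have "\<alpha> / real Nt \<ge> 0" using a by simp
    ultimately show False using big by simp
  qed
  have B: "Bset h m = {m}"
  proof (rule set_eqI)
    fix l show "l \<in> Bset h m \<longleftrightarrow> l \<in> {m}"
      using z[of l] hm m by (cases "l < m") (auto simp: Bset_def)
  qed
  have mn: "min NRF (card (Bset h m)) = 1" using B N by simp
  have F: "{S. S \<subseteq> Bset h m \<and> card S = min NRF (card (Bset h m))} = {{m}}"
  proof (intro set_eqI iffI)
    fix S assume "S \<in> {S. S \<subseteq> Bset h m \<and> card S = min NRF (card (Bset h m))}"
    then have "S \<subseteq> {m}" "card S = 1" using mn B by auto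
    then show "S \<in> {{m}}" by (auto simp: card_1_singleton_iff)
  next
    fix S assume "S \<in> {{m}}" then show "S \<in> {S. S \<subseteq> Bset h m \<and> card S = min NRF (card (Bset h m))}"
      using mn B by simp
  qed
  have "top_energy NRF h m = (cmod (h m))\<^sup>2"
    unfolding top_energy_def F by simp
  then have st: "stops Nt NRF \<alpha> h m" using hm big by (simp add: stops_def)
  then have ex: "\<exists>i\<in>{1..Nt}. stops Nt NRF \<alpha> h i" using m by auto
  have "(LEAST i. i \<in> {1..Nt} \<and> stops Nt NRF \<alpha> h i) \<le> m"
    using m st by (intro Least_le) auto
  then show ?thesis using ex unfolding train_len_def by simp
qed

lemma inner_bounds:
  assumes L: "L \<ge> 1" "L \<le> Nt" and a: "\<alpha> > 0" and N: "NRF \<ge> 1" and I: "I \<in> path_sets Nt L"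
  shows "real (Min I) \<le> (\<integral>g. real (train_len Nt NRF \<alpha> (chan (I, g))) \<partial>(PiM {1..Nt} (\<lambda>_. cgauss (1 / real L))))"
    and "(\<integral>g. real (train_len Nt NRF \<alpha> (chan (I, g))) \<partial>(PiM {1..Nt} (\<lambda>_. cgauss (1 / real L)))) \<le> real (Min I) + 4 * \<alpha> * real L"
proof -
  let ?M1 = "measure_pmf (pmf_of_set (path_sets Nt L))"
  let ?M2 = "PiM {1..Nt} (\<lambda>_. cgauss (1 / real L))"
  let ?f = "\<lambda>g. real (train_len Nt NRF \<alpha> (chan (I, g)))"
  have pc: "prob_space (cgauss (1 / real L))" using L by (intro prob_cgauss) auto
  interpret PP: product_prob_space "\<lambda>_. cgauss (1 / real L)" "{1..Nt}"
    by (rule pps[OF pc])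
  have Ip: "I \<noteq> {}" "finite I" "I \<subseteq> {1..Nt}"
    using I L unfolding path_sets_def by (auto intro: finite_subset)
  define m where "m = Min I"
  have mI: "m \<in> I" using Ip unfolding m_def by auto
  then have m: "m \<in> {1..Nt}" using Ip by auto
  have z: "\<And>l. 1 \<le> l \<Longrightarrow> l < m \<Longrightarrow> chan (I, g) l = 0" for g
    using Ip unfolding m_def chan_def by (auto dest: Min_le)
  have chm: "chan (I, g) m = g m" for g using mI by (simp add: chan_def)
  have fm: "?f \<in> borel_measurable ?M2"
  proof -
    have "(\<lambda>g. (I, g)) \<in> measurable ?M2 (chan_space Nt L)"
      unfolding chan_space_def by (rule measurable_Pair1') simp
    from measurable_compose[OF this train_meas[of Nt NRF \<alpha> L]] show ?thesis by simp
  qed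
  have fi: "integrable ?M2 ?f"
    by (rule PP.P.integrable_const_bound[where B="real Nt", OF _ fm]) (auto simp: tl_le)
  have "(\<integral>g. real m \<partial>?M2) \<le> (\<integral>g. ?f g \<partial>?M2)"
  proof (intro integral_mono fi PP.P.integrable_const)
    fix g
    have "m \<le> train_len Nt NRF \<alpha> (chan (I, g))" by (rule tl_lower) (use m z in auto)
    then show "real m \<le> ?f g" by simp
  qed
  then show "real (Min I) \<le> (\<integral>g. ?f g \<partial>?M2)" using PP.P.prob_space by (simp add: m_def)
  define E where "E = {g \<in> space ?M2. (cmod (g m))\<^sup>2 \<le> \<alpha> / real Nt}"
  have cm: "(\<lambda>x. x m) \<in> borel_measurable ?M2"
  proof -
    have "(\<lambda>x. x m) \<in> measurable ?M2 (cgauss (1 / real L))" by (rule measurable_component_singleton[OF m])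
    moreover have "sets (cgauss (1 / real L)) = sets borel" by (simp add: cgauss_def)
    ultimately show ?thesis using measurable_cong_sets by blast
  qed
  note cm[measurable]
  have Em: "E \<in> sets ?M2" unfolding E_def by measurable
  have "measure ?M2 E = measure (cgauss (1 / real L)) {z. (cmod z)\<^sup>2 \<le> \<alpha> / real Nt}"
  proof -
    have Z: "{z. (cmod z)\<^sup>2 \<le> \<alpha> / real Nt} \<in> sets (cgauss (1 / real L))"
      by (simp add: cgauss_def) measurable
    have "E = {x \<in> space ?M2. x m \<in> {z. (cmod z)\<^sup>2 \<le> \<alpha> / real Nt}}" unfolding E_def by simp
    then show ?thesis unfolding measure_def using PP.emeasure_PiM_Collect_single[OF m Z] by simp
  qed
  also have "\<dots> \<le> 4 * (\<alpha> / real Nt) / (1 / real L)"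
    using a L by (intro gauss2) auto
  finally have PE: "real Nt * measure ?M2 E \<le> 4 * \<alpha> * real L"
    using L by (simp add: field_simps)
  have up: "?f g \<le> real m + real Nt * indicator E g" if g: "g \<in> space ?M2" for g
  proof (cases "g \<in> E")
    case True
    have "train_len Nt NRF \<alpha> (chan (I, g)) \<le> Nt" by (rule tl_le)
    then show ?thesis using True by simp
  next
    case False
    then have "\<alpha> / real Nt < (cmod (chan (I, g) m))\<^sup>2" using g unfolding E_def chm by auto
    then have "train_len Nt NRF \<alpha> (chan (I, g)) \<le> m"
      using tl_upper[OF m z _ _ N] a by auto
    then show ?thesis using False by simp
  qed
  have rm: "(\<lambda>g. real m + real Nt * indicator E g) \<in> borel_measurable ?M2"
    using Em by (intro borel_measurable_add borel_measurable_const borel_measurable_times borel_measurable_indicator)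
  have ri: "integrable ?M2 (\<lambda>g. real m + real Nt * indicator E g)"
    by (rule PP.P.integrable_const_bound[where B="real m + real Nt", OF _ rm]) (auto split: split_indicator)
  have "(\<integral>g. ?f g \<partial>?M2) \<le> (\<integral>g. real m + real Nt * indicator E g \<partial>?M2)"
    by (intro integral_mono fi ri up)
  also have "\<dots> = real m + real Nt * measure ?M2 E"
  proof -
    have i1: "integrable ?M2 (\<lambda>g. real m)" by (rule PP.P.integrable_const)
    have im: "(\<lambda>g. real Nt * indicator E g) \<in> borel_measurable ?M2"
      using Em by (intro borel_measurable_times borel_measurable_const borel_measurable_indicator)
    have i2: "integrable ?M2 (\<lambda>g. real Nt * indicator E g)"
      by (rule PP.P.integrable_const_bound[where B="real Nt", OF _ im]) (auto split: split_indicator)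
    have "(\<integral>g. real m + real Nt * indicator E g \<partial>?M2) = (\<integral>g. real m \<partial>?M2) + (\<integral>g. real Nt * indicator E g \<partial>?M2)"
      by (rule Bochner_Integration.integral_add[OF i1 i2])
    also have "(\<integral>g. real m \<partial>?M2) = real m"
      using PP.P.prob_space by simp
    also have "(\<integral>g. real Nt * indicator E g \<partial>?M2) = real Nt * measure ?M2 (E \<inter> space ?M2)"
      using Bochner_Integration.integral_indicator[of ?M2 E] by simp
    also have "E \<inter> space ?M2 = E" unfolding E_def by auto
    finally show ?thesis .
  qed
  finally show "(\<integral>g. ?f g \<partial>?M2) \<le> real (Min I) + 4 * \<alpha> * real L"
    using PE by (simp add: m_def)
qed

lemma T_bounds:
  assumes L: "L \<ge> 1" "L \<le> Nt" and a: "\<alpha> > 0" and N: "NRF \<ge> 1"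
  shows "(real Nt + 1) / (real L + 1) \<le> T_ITSU Nt L NRF \<alpha>"
    and "T_ITSU Nt L NRF \<alpha> \<le> (real Nt + 1) / (real L + 1) + 4 * \<alpha> * real L"
proof -
  let ?PS = "path_sets Nt L"
  let ?M1 = "measure_pmf (pmf_of_set ?PS)"
  let ?M2 = "PiM {1..Nt} (\<lambda>_. cgauss (1 / real L))"
  let ?f = "\<lambda>\<omega>. real (train_len Nt NRF \<alpha> (chan \<omega>))"
  let ?in = "\<lambda>I. \<integral>g. ?f (I, g) \<partial>?M2"
  have finPS: "finite ?PS" unfolding path_sets_def
    by (rule finite_subset[of _ "Pow {1..Nt}"]) auto
  have nePS: "?PS \<noteq> {}"
  proof -
    have "{1..L} \<in> ?PS" using L by (auto simp: path_sets_def)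
    then show ?thesis by auto
  qed
  have cpos: "card ?PS > 0" using finPS nePS by (simp add: card_gt_0_iff)
  interpret B: prob_space ?M2
    using L by (intro prob_space_PiM prob_cgauss) auto
  interpret P: pair_prob_space ?M1 ?M2 by unfold_locales
  have fi: "integrable (?M1 \<Otimes>\<^sub>M ?M2) ?f"
  proof (rule P.integrable_const_bound[where B="real Nt"])
    show "?f \<in> borel_measurable (?M1 \<Otimes>\<^sub>M ?M2)" using train_meas unfolding chan_space_def .
  qed (auto simp: tl_le)
  have "T_ITSU Nt L NRF \<alpha> = (\<integral>I. ?in I \<partial>?M1)"
    unfolding T_ITSU_def chan_space_def using P.integral_fst'[OF fi] by simp
  also have "\<dots> = (\<Sum>I\<in>?PS. ?in I * pmf (pmf_of_set ?PS) I)"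
    using finPS nePS by (intro integral_measure_pmf_real) auto
  also have "\<dots> = (\<Sum>I\<in>?PS. ?in I) / real (card ?PS)"
    using finPS nePS by (simp add: sum_divide_distrib)
  finally have T: "T_ITSU Nt L NRF \<alpha> = (\<Sum>I\<in>?PS. ?in I) / real (card ?PS)" .
  have "(\<Sum>I\<in>?PS. real (Min I)) \<le> (\<Sum>I\<in>?PS. ?in I)"
    using inner_bounds(1)[OF L a N] by (intro sum_mono) auto
  then have "(\<Sum>I\<in>?PS. real (Min I)) / real (card ?PS) \<le> (\<Sum>I\<in>?PS. ?in I) / real (card ?PS)"
    using cpos by (intro divide_right_mono) auto
  then show "(real Nt + 1) / (real L + 1) \<le> T_ITSU Nt L NRF \<alpha>"
    unfolding T avg_min[OF L] .
  have "(\<Sum>I\<in>?PS. ?in I) \<le> (\<Sum>I\<in>?PS. real (Min I) + 4 * \<alpha> * real L)"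
    using inner_bounds(2)[OF L a N] by (intro sum_mono) auto
  also have "\<dots> = (\<Sum>I\<in>?PS. real (Min I)) + real (card ?PS) * (4 * \<alpha> * real L)"
    by (simp add: sum.distrib)
  finally have "(\<Sum>I\<in>?PS. ?in I) / real (card ?PS) \<le> ((\<Sum>I\<in>?PS. real (Min I)) + real (card ?PS) * (4 * \<alpha> * real L)) / real (card ?PS)"
    using cpos by (intro divide_right_mono) auto
  also have "\<dots> = (\<Sum>I\<in>?PS. real (Min I)) / real (card ?PS) + 4 * \<alpha> * real L"
    using cpos by (simp add: add_divide_distrib)
  finally show "T_ITSU Nt L NRF \<alpha> \<le> (real Nt + 1) / (real L + 1) + 4 * \<alpha> * real L"
    unfolding T avg_min[OF L] .
qed

theorem lemma1:
  fixes L NRF :: nat and \<alpha> :: real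
  assumes "L \<ge> 1" and "\<alpha> > 0" and "NRF = 1 \<or> NRF = L"
  shows "\<exists>C. \<forall>\<^sub>F Nt in sequentially.
           \<bar>T_ITSU Nt L NRF \<alpha> - real Nt / (real L + 1)\<bar> \<le> C"
proof (intro exI)
  have N: "NRF \<ge> 1" using assms by auto
  show "\<forall>\<^sub>F Nt in sequentially. \<bar>T_ITSU Nt L NRF \<alpha> - real Nt / (real L + 1)\<bar> \<le> 1 + 4 * \<alpha> * real L"
    using eventually_ge_at_top[of L]
  proof eventually_elim
    case (elim Nt)
    note b = T_bounds[OF assms(1) elim assms(2) N]
    have e: "(real Nt + 1) / (real L + 1) = real Nt / (real L + 1) + 1 / (real L + 1)"
      by (simp add: add_divide_distrib)
    have "0 \<le> 1 / (real L + 1)" "1 / (real L + 1) \<le> 1" by auto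
    then show ?case using b e by linarith
  qed
qed

end
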